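(* Let $\ell_1,\ell_2,\dots\in\mathbb R^A$ be arbitrary non-negative loss vectors, and let $\pi_1,\pi_2,\dots$ be the FTRL iterates defined in the context. Suppose $0<\alpha_1\le1$, $\eta_1=\eta_2(1-\alpha_1)$, and for all $k\ge2$, $0<\alpha_k<1$ and $0<\eta_{k+1}(1-\alpha_k)\le\eta_k$. Define $\widehat\eta_1=\eta_2$ and $\widehat\eta_k=\eta_k/(1-\alpha_k)$ for $k>1$. Then for every $n\ge1$, $$R_n\le\frac53\sum_{k=1}^n\alpha_k^n\widehat\eta_k\alpha_k\mathsf{Var}_{\pi_k}(\ell_k)+\frac{\log A}{\eta_{n+1}}+3\sum_{k=1}^n\alpha_k^n\widehat\eta_k^2\alpha_k^2\|\ell_k\|_\infty^3\,\mathbb 1\Big(\widehat\eta_k\alpha_k\|\ell_k\|_\infty>\tfrac13\Big).$$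
   Context: Online weighted linear optimization over $\mathcal A=\{1,\dots,A\}$: given $\{\alpha_k\}\subset(0,1]$, let $\alpha_i^k=\alpha_i\prod_{j=i+1}^k(1-\alpha_j)$ for $i<k$, $\alpha_k^k=\alpha_k$. Define $L_0=0$ and $L_k=(1-\alpha_k)L_{k-1}+\alpha_k\ell_k=\sum_{i=1}^k\alpha_i^k\ell_i$. FTRL with negative-entropy regularizer and learning rates $\eta_k>0$: $\pi_k(a)=\exp(-\eta_kL_{k-1}(a))/\sum_{a'}\exp(-\eta_kL_{k-1}(a'))$ for $k\ge1$ (equivalently $\pi_{k}=\arg\min_{\pi\in\Delta(\mathcal A)}\{\langle\pi,L_{k-1}\rangle+\eta_k^{-1}\sum_a\pi(a)\log\pi(a)\}$; $\pi_1$ is uniform). Regret: $R_n=\max_{a\in\mathcal A}\big\{\sum_{k=1}^n\alpha_k^n\langle\pi_k,\ell_k\rangle-\sum_{k=1}^n\alpha_k^n\ell_k(a)\big\}$. For $\pi\in\Delta(\mathcal A)$, $\mathbb E_\pi[\ell]=\sum_a\pi(a)\ell(a)$ and $\mathsf{Var}_\pi(\ell)=\sum_a\pi(a)(\ell(a)-\mathbb E_\pi[\ell])^2$. *)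

theory Defs
  imports Complex_Main
begin

text \<open>Actions are 1..A. Sequences alpha, eta, ell are indexed by k = 1, 2, ...
  (the value at index 0 is irrelevant).  ell k a is the loss of action a at round k.\<close>

definition actions :: "nat \<Rightarrow> nat set" where
  "actions A = {1..A}"

definition wgt :: "(nat \<Rightarrow> real) \<Rightarrow> nat \<Rightarrow> nat \<Rightarrow> real" where
  "wgt \<alpha> i k = \<alpha> i * (\<Prod>j\<in>{i+1..k}. 1 - \<alpha> j)"

fun Lcum :: "(nat \<Rightarrow> real) \<Rightarrow> (nat \<Rightarrow> nat \<Rightarrow> real) \<Rightarrow> nat \<Rightarrow> nat \<Rightarrow> real" where
  "Lcum \<alpha> l 0 a = 0"
| "Lcum \<alpha> l (Suc k) a = (1 - \<alpha> (Suc k)) * Lcum \<alpha> l k a + \<alpha> (Suc k) * l (Suc k) a"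

definition ftrl :: "nat \<Rightarrow> (nat \<Rightarrow> real) \<Rightarrow> (nat \<Rightarrow> real) \<Rightarrow> (nat \<Rightarrow> nat \<Rightarrow> real) \<Rightarrow> nat \<Rightarrow> nat \<Rightarrow> real" where
  "ftrl A \<eta> \<alpha> l k a =
     exp (- \<eta> k * Lcum \<alpha> l (k - 1) a) /
     (\<Sum>a'\<in>actions A. exp (- \<eta> k * Lcum \<alpha> l (k - 1) a'))"

definition expect :: "nat \<Rightarrow> (nat \<Rightarrow> real) \<Rightarrow> (nat \<Rightarrow> real) \<Rightarrow> real" where
  "expect A \<pi> l = (\<Sum>a\<in>actions A. \<pi> a * l a)"

definition var :: "nat \<Rightarrow> (nat \<Rightarrow> real) \<Rightarrow> (nat \<Rightarrow> real) \<Rightarrow> real" where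
  "var A \<pi> l = (\<Sum>a\<in>actions A. \<pi> a * (l a - expect A \<pi> l)\<^sup>2)"

definition supnorm :: "nat \<Rightarrow> (nat \<Rightarrow> real) \<Rightarrow> real" where
  "supnorm A l = Max ((\<lambda>a. \<bar>l a\<bar>) ` actions A)"

definition regret :: "nat \<Rightarrow> (nat \<Rightarrow> real) \<Rightarrow> (nat \<Rightarrow> real) \<Rightarrow> (nat \<Rightarrow> nat \<Rightarrow> real) \<Rightarrow> nat \<Rightarrow> real" where
  "regret A \<eta> \<alpha> l n = Max ((\<lambda>a. (\<Sum>k=1..n. wgt \<alpha> k n * expect A (ftrl A \<eta> \<alpha> l k) (l k))
                                   - (\<Sum>k=1..n. wgt \<alpha> k n * l k a)) ` actions A)"

definition eta_hat :: "(nat \<Rightarrow> real) \<Rightarrow> (nat \<Rightarrow> real) \<Rightarrow> nat \<Rightarrow> real" where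
  "eta_hat \<eta> \<alpha> k = (if k = 1 then \<eta> 2 else \<eta> k / (1 - \<alpha> k))"

end

theory Submission
  imports Defs "HOL-Analysis.Analysis"
begin

lemma exp_quad: fixes t :: real assumes "t \<le> 1" shows "exp t \<le> 1 + t + t^2"
proof (cases "t \<ge> 0")
  case True thus ?thesis using exp_bound assms by auto
next
  case False
  have "1 - t \<le> exp (-t)" using exp_ge_add_one_self[of "-t"] by simp
  hence "exp t * (1 - t) \<le> exp t * exp (-t)" by (simp add: mult_left_mono)
  hence h: "exp t * (1 - t) \<le> 1" by (simp add: exp_minus)
  have t3: "t^3 \<le> 0" using mult_nonneg_nonpos[of "t*t" t] False by (simp add: power3_eq_cube)
  have "1 \<le> (1 + t + t^2) * (1 - t)" using t3 by (simp add: algebra_simps power2_eq_square power3_eq_cube)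
  with h have "exp t * (1 - t) \<le> (1 + t + t^2) * (1 - t)" by linarith
  thus ?thesis using False by (simp add: mult_le_cancel_right)
qed

lemma exp_young: fixes p u :: real assumes "0 \<le> p" "p \<le> 1"
  shows "exp (p*u) \<le> p * exp u + (1-p)"
  using convex_onD[OF exp_convex, of p 0 u] assms by simp

lemma step_bound:
  fixes S :: "nat set" and \<pi> Y :: "nat \<Rightarrow> real" and M :: real
  assumes fin: "finite S" and pnn: "\<And>a. a \<in> S \<Longrightarrow> \<pi> a \<ge> 0" and ps: "(\<Sum>a\<in>S. \<pi> a) = 1"
    and Yb: "\<And>a. a \<in> S \<Longrightarrow> 0 \<le> Y a \<and> Y a \<le> M"
  shows "(\<Sum>a\<in>S. \<pi> a * Y a) + ln (\<Sum>a\<in>S. \<pi> a * exp (- Y a))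
     \<le> 5/3 * (\<Sum>a\<in>S. \<pi> a * (Y a - (\<Sum>a\<in>S. \<pi> a * Y a))\<^sup>2) + 3 * M^3 * (if M > 1/3 then 1 else 0)"
proof -
  define \<mu> where "\<mu> = (\<Sum>a\<in>S. \<pi> a * Y a)"
  define V where "V = (\<Sum>a\<in>S. \<pi> a * (Y a - \<mu>)\<^sup>2)"
  define Z where "Z = (\<Sum>a\<in>S. \<pi> a * exp (- Y a))"
  have ne: "S \<noteq> {}" using ps by auto
  then obtain a0 where a0: "a0 \<in> S" by auto
  have M0: "M \<ge> 0" using Yb[OF a0] by linarith
  have V0: "V \<ge> 0" unfolding V_def by (intro sum_nonneg) (simp add: pnn)
  have mu0: "\<mu> \<ge> 0" unfolding \<mu>_def by (intro sum_nonneg) (simp add: pnn Yb)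
  have "\<mu> \<le> (\<Sum>a\<in>S. \<pi> a * M)" unfolding \<mu>_def by (intro sum_mono mult_left_mono) (simp_all add: pnn Yb)
  also have "\<dots> = M" using ps by (simp add: sum_distrib_right[symmetric])
  finally have muM: "\<mu> \<le> M" .
  have "(\<Sum>a\<in>S. \<pi> a * exp (-M)) \<le> Z" unfolding Z_def
    by (intro sum_mono mult_left_mono) (simp_all add: pnn Yb)
  moreover have "(\<Sum>a\<in>S. \<pi> a * exp (-M)) = exp (-M)" using ps by (simp add: sum_distrib_right[symmetric])
  ultimately have Zpos: "Z > 0" by (metis exp_gt_zero order_less_le_trans)
  have extra: "3 * M^3 * (if M > 1/3 then 1 else 0) \<ge> (0::real)" using M0 by simp
  show ?thesis
  proof (cases "M > 1")
    case True
    have "Z \<le> (\<Sum>a\<in>S. \<pi> a * 1)" unfolding Z_def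
      by (intro sum_mono mult_left_mono) (simp_all add: pnn Yb)
    hence "Z \<le> 1" using ps by simp
    hence "ln Z \<le> 0" using Zpos by simp
    moreover have "M \<le> M^3"
    proof -
      have "1 \<le> M^2" using True by (simp add: one_le_power)
      hence "M * 1 \<le> M * M^2" using M0 by (intro mult_left_mono) auto
      thus ?thesis by (simp add: power3_eq_cube power2_eq_square)
    qed
    ultimately have "\<mu> + ln Z \<le> 3 * M^3 * (if M > 1/3 then 1 else 0)" using muM True M0 by auto
    thus ?thesis using V0 unfolding \<mu>_def[symmetric] V_def[symmetric] Z_def[symmetric] by linarith
  next
    case False
    have sid: "(\<Sum>a\<in>S. \<pi> a + (\<mu> * \<pi> a - \<pi> a * Y a) + \<pi> a * (Y a - \<mu>)\<^sup>2)
       = (\<Sum>a\<in>S. \<pi> a) + (\<mu> * (\<Sum>a\<in>S. \<pi> a) - (\<Sum>a\<in>S. \<pi> a * Y a)) + V"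
      unfolding V_def by (simp add: sum.distrib sum_subtractf sum_distrib_left)
    have "Z \<le> (\<Sum>a\<in>S. \<pi> a * (exp (-\<mu>) * (1 + (\<mu> - Y a) + (\<mu> - Y a)^2)))" unfolding Z_def
    proof (intro sum_mono mult_left_mono)
      fix a assume a: "a \<in> S"
      have "exp (- Y a) = exp (-\<mu>) * exp (\<mu> - Y a)" by (simp add: exp_add[symmetric])
      also have "\<dots> \<le> exp (-\<mu>) * (1 + (\<mu> - Y a) + (\<mu> - Y a)^2)"
        using exp_quad[of "\<mu> - Y a"] Yb[OF a] muM False by (intro mult_left_mono) auto
      finally show "exp (- Y a) \<le> exp (-\<mu>) * (1 + (\<mu> - Y a) + (\<mu> - Y a)^2)" .
    qed (simp add: pnn)
    also have "\<dots> = exp (-\<mu>) * (\<Sum>a\<in>S. \<pi> a + (\<mu> * \<pi> a - \<pi> a * Y a) + \<pi> a * (Y a - \<mu>)\<^sup>2)"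
      unfolding sum_distrib_left
      by (intro sum.cong refl) (simp add: algebra_simps power2_eq_square)
    also have "\<dots> = exp (-\<mu>) * ((\<Sum>a\<in>S. \<pi> a) + (\<mu> * (\<Sum>a\<in>S. \<pi> a) - (\<Sum>a\<in>S. \<pi> a * Y a)) + V)"
      unfolding sid ..
    also have "\<dots> = exp (-\<mu>) * (1 + V)" using ps by (simp add: \<mu>_def)
    finally have "Z \<le> exp (-\<mu>) * (1 + V)" .
    hence "ln Z \<le> ln (exp (-\<mu>) * (1 + V))" using Zpos by simp
    also have "\<dots> = -\<mu> + ln (1 + V)" using V0 by (simp add: ln_mult)
    also have "\<dots> \<le> -\<mu> + V" using V0 ln_le_minus_one[of "1+V"] by simp
    finally have "\<mu> + ln Z \<le> V" by simp
    thus ?thesis using V0 extra unfolding \<mu>_def[symmetric] V_def[symmetric] Z_def[symmetric] by linarith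
  qed
qed

definition Phi :: "nat set \<Rightarrow> real \<Rightarrow> (nat \<Rightarrow> real) \<Rightarrow> real" where
  "Phi S lam L = (ln (real (card S)) - ln (\<Sum>a\<in>S. exp (- lam * L a))) / lam"

lemma Phi_zero: "Phi S lam (\<lambda>a. 0) = 0"
  by (simp add: Phi_def)

lemma Phi_le:
  assumes fin: "finite S" and a: "a \<in> S" and lp: "lam > 0"
  shows "Phi S lam L \<le> L a + ln (real (card S)) / lam"
proof -
  have "exp (- lam * L a) \<le> (\<Sum>a\<in>S. exp (- lam * L a))"
    using member_le_sum[OF a, of "\<lambda>a. exp (- lam * L a)"] fin by simp
  hence "ln (exp (- lam * L a)) \<le> ln (\<Sum>a\<in>S. exp (- lam * L a))"
    by (intro ln_mono) auto
  hence "- lam * L a \<le> ln (\<Sum>a\<in>S. exp (- lam * L a))" by simp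
  hence "ln (real (card S)) - ln (\<Sum>a\<in>S. exp (- lam * L a)) \<le> lam * L a + ln (real (card S))" by simp
  hence "Phi S lam L \<le> (lam * L a + ln (real (card S))) / lam"
    unfolding Phi_def using lp by (simp add: divide_right_mono)
  also have "\<dots> = L a + ln (real (card S)) / lam" using lp by (simp add: field_simps)
  finally show ?thesis .
qed

lemma Phi_mono:
  assumes fin: "finite S" and ne: "S \<noteq> {}" and l1: "0 < lam'" and l2: "lam' \<le> lam"
  shows "Phi S lam L \<le> Phi S lam' L"
proof -
  define N where "N = real (card S)"
  have N0: "N > 0" using fin ne by (simp add: N_def card_gt_0_iff)
  define Z where "Z = (\<Sum>a\<in>S. exp (- lam * L a))"
  have Z0: "Z > 0" unfolding Z_def using fin ne by (intro sum_pos) auto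
  define m where "m = Z / N"
  have m0: "m > 0" using Z0 N0 by (simp add: m_def)
  define p where "p = lam' / lam"
  have lp: "lam > 0" using l1 l2 by linarith
  have p0: "0 \<le> p" "p \<le> 1" using l1 l2 lp by (simp_all add: p_def)
  have pl: "p * lam = lam'" using lp by (simp add: p_def)
  have sp: "(\<Sum>a\<in>S. p * (exp (- lam * L a) / m)) = p * (Z / m)"
    by (simp add: sum_distrib_left[symmetric] sum_divide_distrib[symmetric] Z_def)
  have "(\<Sum>a\<in>S. exp (- lam' * L a)) \<le> (\<Sum>a\<in>S. exp (p * ln m) * (p * (exp (- lam * L a) / m) + (1 - p)))"
  proof (intro sum_mono)
    fix a assume "a \<in> S"
    have "exp (- lam' * L a) = exp (p * ln m) * exp (p * (- lam * L a - ln m))"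
      by (simp add: exp_add[symmetric] algebra_simps pl[symmetric])
    also have "\<dots> \<le> exp (p * ln m) * (p * exp (- lam * L a - ln m) + (1 - p))"
      using exp_young[OF p0, of "- lam * L a - ln m"] by (simp add: mult_left_mono)
    also have "exp (- lam * L a - ln m) = exp (- lam * L a) / m" using m0 by (simp add: exp_diff)
    finally show "exp (- lam' * L a) \<le> exp (p * ln m) * (p * (exp (- lam * L a) / m) + (1 - p))" .
  qed
  also have "\<dots> = exp (p * ln m) * (\<Sum>a\<in>S. p * (exp (- lam * L a) / m) + (1 - p))"
    by (simp add: sum_distrib_left)
  also have "\<dots> = exp (p * ln m) * ((\<Sum>a\<in>S. p * (exp (- lam * L a) / m)) + (1 - p) * N)"
    by (simp add: sum.distrib N_def)
  also have "\<dots> = exp (p * ln m) * (p * (Z / m) + (1 - p) * N)" by (simp only: sp)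
  also have "\<dots> = exp (p * ln m) * N" using N0 Z0 by (simp add: m_def algebra_simps)
  finally have h: "(\<Sum>a\<in>S. exp (- lam' * L a)) \<le> exp (p * ln m) * N" .
  have Z'0: "(\<Sum>a\<in>S. exp (- lam' * L a)) > 0" using fin ne by (intro sum_pos) auto
  have "ln (\<Sum>a\<in>S. exp (- lam' * L a)) \<le> ln (exp (p * ln m) * N)"
    using h Z'0 by simp
  also have "\<dots> = p * (ln Z - ln N) + ln N" using N0 Z0 by (simp add: ln_mult m_def ln_div)
  finally have h2: "ln (\<Sum>a\<in>S. exp (- lam' * L a)) \<le> p * (ln Z - ln N) + ln N" .
  have "Phi S lam L = (ln N - ln Z) / lam" by (simp add: Phi_def N_def Z_def)
  also have "\<dots> = p * (ln N - ln Z) / lam'" using lp l1 by (simp add: p_def)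
  also have "\<dots> \<le> (ln N - ln (\<Sum>a\<in>S. exp (- lam' * L a))) / lam'"
    using h2 l1 by (intro divide_right_mono) (auto simp: algebra_simps)
  also have "\<dots> = Phi S lam' L" by (simp add: Phi_def N_def)
  finally show ?thesis .
qed

lemma Phi_shift:
  assumes fin: "finite S" and ne: "S \<noteq> {}" and lp: "lam > 0"
  shows "Phi S lam (\<lambda>a. L a + x a) = Phi S lam L
     - ln (\<Sum>a\<in>S. (exp (- lam * L a) / (\<Sum>b\<in>S. exp (- lam * L b))) * exp (- lam * x a)) / lam"
proof -
  define Z where "Z = (\<Sum>b\<in>S. exp (- lam * L b))"
  have Z0: "Z > 0" unfolding Z_def using fin ne by (intro sum_pos) auto
  have W0: "(\<Sum>a\<in>S. (exp (- lam * L a) / Z) * exp (- lam * x a)) > 0"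
    using fin ne Z0 by (intro sum_pos) auto
  have "(\<Sum>a\<in>S. exp (- lam * (L a + x a))) = Z * (\<Sum>a\<in>S. (exp (- lam * L a) / Z) * exp (- lam * x a))"
    using Z0 by (simp add: sum_distrib_left algebra_simps exp_add[symmetric])
  hence "ln (\<Sum>a\<in>S. exp (- lam * (L a + x a))) = ln Z + ln (\<Sum>a\<in>S. (exp (- lam * L a) / Z) * exp (- lam * x a))"
    using Z0 W0 by (simp add: ln_mult)
  thus ?thesis unfolding Phi_def Z_def[symmetric] by (simp add: diff_divide_distrib add_divide_distrib)
qed

theorem theorem2:
  fixes A :: nat and \<alpha> \<eta> :: "nat \<Rightarrow> real" and l :: "nat \<Rightarrow> nat \<Rightarrow> real" and n :: nat
  assumes A_pos: "A \<ge> 1"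
    and loss_nonneg: "\<And>k a. k \<ge> 1 \<Longrightarrow> a \<in> actions A \<Longrightarrow> l k a \<ge> 0"
    and eta_pos: "\<And>k. k \<ge> 2 \<Longrightarrow> \<eta> k > 0"
    and alpha1: "0 < \<alpha> 1" "\<alpha> 1 \<le> 1"
    and eta1: "\<eta> 1 = \<eta> 2 * (1 - \<alpha> 1)"
    and alphak: "\<And>k. k \<ge> 2 \<Longrightarrow> 0 < \<alpha> k \<and> \<alpha> k < 1"
    and etak: "\<And>k. k \<ge> 2 \<Longrightarrow> 0 < \<eta> (k + 1) * (1 - \<alpha> k) \<and> \<eta> (k + 1) * (1 - \<alpha> k) \<le> \<eta> k"
    and n_pos: "n \<ge> 1"
  shows "regret A \<eta> \<alpha> l n \<le>
     5 / 3 * (\<Sum>k=1..n. wgt \<alpha> k n * eta_hat \<eta> \<alpha> k * \<alpha> k * var A (ftrl A \<eta> \<alpha> l k) (l k))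
     + ln (real A) / \<eta> (n + 1)
     + 3 * (\<Sum>k=1..n. wgt \<alpha> k n * (eta_hat \<eta> \<alpha> k)\<^sup>2 * (\<alpha> k)\<^sup>2 * (supnorm A (l k)) ^ 3
              * (if eta_hat \<eta> \<alpha> k * \<alpha> k * supnorm A (l k) > 1 / 3 then 1 else 0))"
proof -
  define S where "S = actions A"
  have finS: "finite S" and neS: "S \<noteq> {}" and cardS: "card S = A"
    using A_pos by (auto simp: S_def actions_def)
  define P where "P k = (\<Prod>j\<in>{2..k}. 1 - \<alpha> j)" for k
  have Ppos: "P k > 0" for k unfolding P_def using alphak by (intro prod_pos) auto
  have P01: "P 0 = 1" "P 1 = 1" by (simp_all add: P_def)
  have PSuc: "P (Suc k) = P k * (1 - \<alpha> (Suc k))" if "k \<ge> 1" for k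
  proof -
    have "{2..Suc k} = insert (Suc k) {2..k}" using that by auto
    thus ?thesis unfolding P_def by (simp add: mult.commute)
  qed
  have PSuc2: "P k = P (k - 1) * (1 - \<alpha> k)" if "k \<ge> 2" for k
  proof -
    define j where "j = k - 1"
    have j: "k = Suc j" "j \<ge> 1" using that by (auto simp: j_def)
    show ?thesis using PSuc[OF j(2)] j(1) by simp
  qed
  define \<beta> where "\<beta> k = \<alpha> k / P k" for k
  define Lt where "Lt k a = (\<Sum>i=1..k. \<beta> i * l i a)" for k a
  have Lt0: "Lt 0 = (\<lambda>a. 0)" by (simp add: Lt_def fun_eq_iff)
  have LtSuc: "Lt (Suc k) = (\<lambda>a. Lt k a + \<beta> (Suc k) * l (Suc k) a)" for k
    by (simp add: Lt_def fun_eq_iff)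
  have Lcum_eq: "Lcum \<alpha> l k a = P k * Lt k a" for k a
  proof (induction k)
    case 0 show ?case by (simp add: Lt_def)
  next
    case (Suc k)
    show ?case
    proof (cases "k = 0")
      case True
      have P1': "P (Suc 0) = 1" by (simp add: P_def)
      thus ?thesis using \<open>k = 0\<close> by (simp add: Lt_def \<beta>_def)
    next
      case False
      hence k1: "k \<ge> 1" by simp
      have h: "P (Suc k) * \<beta> (Suc k) = \<alpha> (Suc k)" using Ppos[of "Suc k"] by (simp add: \<beta>_def)
      have "P (Suc k) * Lt (Suc k) a = P (Suc k) * Lt k a + (P (Suc k) * \<beta> (Suc k)) * l (Suc k) a"
        by (simp add: LtSuc algebra_simps)
      also have "\<dots> = P k * (1 - \<alpha> (Suc k)) * Lt k a + \<alpha> (Suc k) * l (Suc k) a"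
        using h unfolding PSuc[OF k1] by simp
      finally show ?thesis using Suc.IH by (simp add: algebra_simps)
    qed
  qed
  have wgt_eq: "wgt \<alpha> k n = P n * \<beta> k" if "1 \<le> k" "k \<le> n" for k
  proof -
    have split: "{2..n} = {2..k} \<union> {k+1..n}" using that by auto
    have "P n = (\<Prod>j\<in>{2..k} \<union> {k+1..n}. 1 - \<alpha> j)" unfolding P_def using split by simp
    also have "\<dots> = P k * (\<Prod>j\<in>{k+1..n}. 1 - \<alpha> j)" unfolding P_def by (rule prod.union_disjoint) auto
    finally have "P n = P k * (\<Prod>j\<in>{k+1..n}. 1 - \<alpha> j)" .
    thus ?thesis using Ppos[of k] by (simp add: wgt_def \<beta>_def)
  qed
  define lam where "lam k = (if k = 1 then \<eta> 2 else \<eta> k * P (k - 1))" for k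
  have lam_pos: "lam k > 0" if "k \<ge> 1" for k
    using that eta_pos[of 2] eta_pos[of k] Ppos[of "k-1"] by (auto simp: lam_def)
  have lam_mono: "lam (Suc k) \<le> lam k" if "k \<ge> 1" for k
  proof (cases "k = 1")
    case True thus ?thesis by (simp add: lam_def P_def numeral_2_eq_2)
  next
    case False
    hence k2: "k \<ge> 2" using that by linarith
    have "P k = P (k - 1) * (1 - \<alpha> k)" using PSuc2[OF k2] .
    with k2 have "lam (Suc k) = (\<eta> (k+1) * (1 - \<alpha> k)) * P (k - 1)" by (simp add: lam_def)
    also have "\<dots> \<le> \<eta> k * P (k - 1)" using etak[OF k2] Ppos[of "k-1"] by (intro mult_right_mono) auto
    also have "\<dots> = lam k" using False by (simp add: lam_def)
    finally show ?thesis .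
  qed
  have ftrl_eq: "ftrl A \<eta> \<alpha> l k = (\<lambda>a. exp (- lam k * Lt (k-1) a) / (\<Sum>b\<in>S. exp (- lam k * Lt (k-1) b)))"
    if "k \<ge> 1" for k
  proof (cases "k = 1")
    case True thus ?thesis by (simp add: ftrl_def Lt0 S_def fun_eq_iff)
  next
    case False thus ?thesis by (simp add: ftrl_def Lcum_eq lam_def S_def fun_eq_iff mult.assoc)
  qed
  have c_eq: "lam k * \<beta> k = eta_hat \<eta> \<alpha> k * \<alpha> k" if "k \<ge> 1" for k
  proof (cases "k = 1")
    case True thus ?thesis by (simp add: lam_def \<beta>_def eta_hat_def P_def)
  next
    case False
    hence k2: "k \<ge> 2" using that by linarith
    have n1: "1 - \<alpha> k \<noteq> 0" using alphak[OF k2] by simp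
    have n2: "P (k - 1) \<noteq> 0" using Ppos[of "k-1"] by simp
    have e1: "lam k = \<eta> k * P (k-1)" using False by (simp add: lam_def)
    have e2: "\<beta> k = \<alpha> k / (P (k-1) * (1 - \<alpha> k))" unfolding \<beta>_def PSuc2[OF k2] ..
    have e3: "eta_hat \<eta> \<alpha> k = \<eta> k / (1 - \<alpha> k)" using False by (simp add: eta_hat_def)
    show ?thesis unfolding e1 e2 e3 using n1 n2 by (simp add: field_simps)
  qed
  define d where "d k = - ln (\<Sum>a\<in>S. ftrl A \<eta> \<alpha> l k a * exp (- (lam k * \<beta> k) * l k a)) / lam k" for k
  have tele: "(\<Sum>k=1..m. d k) \<le> Phi S (lam (m+1)) (Lt m)" for m
  proof (induction m)
    case 0 show ?case by (simp add: Lt0 Phi_zero)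
  next
    case (Suc m)
    have "(\<Sum>k=1..Suc m. d k) = (\<Sum>k=1..m. d k) + d (Suc m)" by simp
    also have "\<dots> \<le> Phi S (lam (Suc m)) (Lt m) + d (Suc m)" using Suc.IH by simp
    also have "\<dots> = Phi S (lam (Suc m)) (Lt (Suc m))"
      unfolding LtSuc Phi_shift[OF finS neS lam_pos[of "Suc m"], simplified]
      by (simp add: d_def ftrl_eq mult.assoc)
    also have "\<dots> \<le> Phi S (lam (Suc m + 1)) (Lt (Suc m))"
      using lam_pos[of "Suc (Suc m)"] lam_mono[of "Suc m"] by (intro Phi_mono[OF finS neS]) auto
    finally show ?case .
  qed
  define E where "E k = expect A (ftrl A \<eta> \<alpha> l k) (l k)" for k
  define B1 where "B1 = (\<Sum>k=1..n. wgt \<alpha> k n * eta_hat \<eta> \<alpha> k * \<alpha> k * var A (ftrl A \<eta> \<alpha> l k) (l k))"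
  define B3 where "B3 = (\<Sum>k=1..n. wgt \<alpha> k n * (eta_hat \<eta> \<alpha> k)\<^sup>2 * (\<alpha> k)\<^sup>2 * (supnorm A (l k)) ^ 3
              * (if eta_hat \<eta> \<alpha> k * \<alpha> k * supnorm A (l k) > 1 / 3 then 1 else 0))"
  have termb: "P n * (\<beta> k * E k - d k) \<le>
      5/3 * (wgt \<alpha> k n * eta_hat \<eta> \<alpha> k * \<alpha> k * var A (ftrl A \<eta> \<alpha> l k) (l k))
      + 3 * (wgt \<alpha> k n * (eta_hat \<eta> \<alpha> k)\<^sup>2 * (\<alpha> k)\<^sup>2 * (supnorm A (l k)) ^ 3
              * (if eta_hat \<eta> \<alpha> k * \<alpha> k * supnorm A (l k) > 1 / 3 then 1 else 0))"
    if k: "k \<in> {1..n}" for k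
  proof -
    have k1: "k \<ge> 1" using k by simp
    define c where "c = eta_hat \<eta> \<alpha> k * \<alpha> k"
    have cl: "lam k * \<beta> k = c" using c_eq[OF k1] by (simp add: c_def)
    have lk: "lam k > 0" using lam_pos[OF k1] .
    have ak: "\<alpha> k > 0" using alpha1 alphak[of k] k1 by (cases "k = 1") auto
    have bk: "\<beta> k > 0" using ak Ppos[of k] by (simp add: \<beta>_def)
    have c0: "c > 0" using lk bk cl by (metis mult_pos_pos)
    define \<pi> where "\<pi> = ftrl A \<eta> \<alpha> l k"
    define sn where "sn = supnorm A (l k)"
    have pnn: "\<pi> a \<ge> 0" for a by (simp add: \<pi>_def ftrl_def divide_nonneg_nonneg sum_nonneg)
    have ps: "(\<Sum>a\<in>S. \<pi> a) = 1"
    proof -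
      have Zp: "(\<Sum>b\<in>S. exp (- lam k * Lt (k-1) b)) > 0" using finS neS by (intro sum_pos) auto
      show ?thesis unfolding \<pi>_def ftrl_eq[OF k1] using Zp by (simp add: sum_divide_distrib[symmetric])
    qed
    have Yb: "0 \<le> c * l k a \<and> c * l k a \<le> c * sn" if a: "a \<in> S" for a
    proof -
      have l0: "l k a \<ge> 0" using loss_nonneg[OF k1] a by (simp add: S_def)
      have "l k a \<le> \<bar>l k a\<bar>" by simp
      also have "\<dots> \<le> sn" unfolding sn_def supnorm_def S_def[symmetric] using a finS by (intro Max_ge) auto
      finally show ?thesis using l0 c0 by (simp add: mult_left_mono)
    qed
    have sb: "(\<Sum>a\<in>S. \<pi> a * (c * l k a)) + ln (\<Sum>a\<in>S. \<pi> a * exp (- (c * l k a)))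
      \<le> 5/3 * (\<Sum>a\<in>S. \<pi> a * (c * l k a - (\<Sum>a\<in>S. \<pi> a * (c * l k a)))\<^sup>2)
        + 3 * (c * sn)^3 * (if c * sn > 1/3 then 1 else 0)"
      using step_bound[OF finS, of \<pi> "\<lambda>a. c * l k a" "c * sn"] pnn ps Yb by blast
    have s1: "(\<Sum>a\<in>S. \<pi> a * (c * l k a)) = c * E k"
      by (simp add: E_def expect_def \<pi>_def S_def sum_distrib_left algebra_simps)
    have s2: "(\<Sum>a\<in>S. \<pi> a * (c * l k a - c * E k)\<^sup>2) = c^2 * var A \<pi> (l k)"
    proof -
      have "(\<Sum>a\<in>S. \<pi> a * (c * l k a - c * E k)\<^sup>2) = (\<Sum>a\<in>S. c^2 * (\<pi> a * (l k a - E k)\<^sup>2))"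
        by (intro sum.cong) (simp_all add: power2_eq_square algebra_simps)
      thus ?thesis by (simp add: var_def E_def \<pi>_def S_def sum_distrib_left)
    qed
    define W where "W = (\<Sum>a\<in>S. \<pi> a * exp (- (c * l k a)))"
    have main: "c * E k + ln W \<le> 5/3 * (c^2 * var A \<pi> (l k)) + 3 * (c * sn)^3 * (if c * sn > 1/3 then 1 else 0)"
      using sb unfolding s1 s2 W_def .
    have dk: "d k = - ln W / lam k" by (simp add: d_def W_def \<pi>_def cl)
    have wg: "wgt \<alpha> k n = P n * \<beta> k" using wgt_eq k by auto
    define w where "w = P n * \<beta> k"
    have w0: "w \<ge> 0" using bk Ppos[of n] by (simp add: w_def)
    define I where "I = (if c * sn > 1/3 then 1 else 0::real)"
    define V where "V = var A \<pi> (l k)"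
    have "P n * (\<beta> k * E k - d k) = (w / c) * (c * E k + ln W)"
      using c0 lk bk cl[symmetric] unfolding dk w_def by (simp add: field_simps)
    also have "\<dots> \<le> (w / c) * (5/3 * (c^2 * V) + 3 * (c * sn)^3 * I)"
      by (rule mult_left_mono[OF main[folded I_def V_def]]) (use c0 w0 in simp)
    also have "\<dots> = 5/3 * (w * c * V) + 3 * (w * c^2 * sn^3 * I)"
      using c0 by (simp add: field_simps power2_eq_square power3_eq_cube)
    also have "\<dots> = 5/3 * (wgt \<alpha> k n * eta_hat \<eta> \<alpha> k * \<alpha> k * var A (ftrl A \<eta> \<alpha> l k) (l k))
      + 3 * (wgt \<alpha> k n * (eta_hat \<eta> \<alpha> k)\<^sup>2 * (\<alpha> k)\<^sup>2 * (supnorm A (l k)) ^ 3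
              * (if eta_hat \<eta> \<alpha> k * \<alpha> k * supnorm A (l k) > 1 / 3 then 1 else 0))"
      unfolding w_def wg[symmetric] c_def V_def \<pi>_def sn_def I_def
      by (simp add: power_mult_distrib mult.assoc)
    finally show ?thesis .
  qed
  have bnd: "(\<Sum>k=1..n. wgt \<alpha> k n * E k) - (\<Sum>k=1..n. wgt \<alpha> k n * l k a) \<le> 5/3 * B1 + ln (real A) / \<eta> (n + 1) + 3 * B3"
    if a: "a \<in> S" for a
  proof -
    have "(\<Sum>k=1..n. wgt \<alpha> k n * E k) - (\<Sum>k=1..n. wgt \<alpha> k n * l k a)
        = P n * (\<Sum>k=1..n. \<beta> k * E k) - P n * Lt n a"
    proof -
      have s1: "(\<Sum>k=1..n. wgt \<alpha> k n * E k) = (\<Sum>k=1..n. P n * (\<beta> k * E k))"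
        by (intro sum.cong) (auto simp: wgt_eq)
      have s2: "(\<Sum>k=1..n. wgt \<alpha> k n * l k a) = (\<Sum>k=1..n. P n * (\<beta> k * l k a))"
        by (intro sum.cong) (auto simp: wgt_eq)
      show ?thesis by (simp only: s1 s2 Lt_def sum_distrib_left)
    qed
    also have "\<dots> \<le> P n * (\<Sum>k=1..n. \<beta> k * E k) - P n * ((\<Sum>k=1..n. d k) - ln (real A) / lam (n+1))"
    proof -
      have "(\<Sum>k=1..n. d k) \<le> Lt n a + ln (real A) / lam (n+1)"
        using tele[of n] Phi_le[OF finS a lam_pos[of "n+1"], where L="Lt n"] cardS by simp
      hence "P n * ((\<Sum>k=1..n. d k) - ln (real A) / lam (n+1)) \<le> P n * Lt n a"
        using Ppos[of n] by (simp add: mult_left_mono)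
      thus ?thesis by linarith
    qed
    also have "\<dots> = (\<Sum>k=1..n. P n * (\<beta> k * E k - d k)) + ln (real A) * (P n / lam (n+1))"
      by (simp add: sum_distrib_left sum_subtractf algebra_simps)
    also have "\<dots> \<le> (5/3 * B1 + 3 * B3) + ln (real A) * (1 / \<eta> (n+1))"
    proof -
      have pl: "P n / lam (n+1) = 1 / \<eta> (n+1)" using n_pos Ppos[of n] by (simp add: lam_def)
      have "(\<Sum>k=1..n. P n * (\<beta> k * E k - d k)) \<le> (\<Sum>k=1..n.
          5/3 * (wgt \<alpha> k n * eta_hat \<eta> \<alpha> k * \<alpha> k * var A (ftrl A \<eta> \<alpha> l k) (l k))
          + 3 * (wgt \<alpha> k n * (eta_hat \<eta> \<alpha> k)\<^sup>2 * (\<alpha> k)\<^sup>2 * (supnorm A (l k)) ^ 3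
              * (if eta_hat \<eta> \<alpha> k * \<alpha> k * supnorm A (l k) > 1 / 3 then 1 else 0)))"
        by (rule sum_mono) (rule termb)
      also have "\<dots> = 5/3 * B1 + 3 * B3"
        unfolding B1_def B3_def by (simp add: sum.distrib sum_distrib_left)
      finally show ?thesis unfolding pl by simp
    qed
    finally show ?thesis by simp
  qed
  show ?thesis
    unfolding regret_def S_def[symmetric] E_def[symmetric] B1_def[symmetric] B3_def[symmetric]
    using finS neS bnd by (intro Max.boundedI) auto
qed

end
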